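(* Let $s_0\in(0,1)$, $\tau,\eta,\lambda>0$, and let $(I_j^0)_{j\in\mathbb{Z}}$ be a finitely supported sequence with $I_j^0\in[0,1)$ for all $j$ and $I_j^0>0$ for at least one $j$. Let $f(v):=s_0(1-e^{-\tau v})-\eta v$ and let $(\mathcal{I}_j^\infty)_{j\in\mathbb{Z}}$ be the unique positive, bounded solution of $$0=f(\mathcal{I}_j)+I_j^0+\lambda\left(\mathcal{I}_{j-1}-2\mathcal{I}_j+\mathcal{I}_{j+1}\right),\qquad j\in\mathbb{Z}.$$ Let $(\mathcal{I}_j(t))_{j\in\mathbb{Z}}$ be the solution of $$\mathcal{I}_j'(t)=f(\mathcal{I}_j(t))+I_j^0+\lambda\left(\mathcal{I}_{j-1}(t)-2\mathcal{I}_j(t)+\mathcal{I}_{j+1}(t)\right),\qquad j\in\mathbb{Z},\ t>0,$$ starting from some nonnegative, bounded, compactly (finitely) supported initial condition. Then $(\mathcal{I}_j(t))_{j\in\mathbb{Z}}$ converges to $(\mathcal{I}_j^\infty)_{j\in\mathbb{Z}}$ locally uniformly in $j$ as $t\to+\infty$.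
   Context: Existence and uniqueness of the positive bounded stationary solution $(\mathcal{I}_j^\infty)$ is part of the setting (it is a separate result of the paper). *)

theory Defs
  imports "HOL-Analysis.Analysis"
begin

definition reac :: "real \<Rightarrow> real \<Rightarrow> real \<Rightarrow> real \<Rightarrow> real" where
  "reac s0 tau eta v = s0 * (1 - exp (- tau * v)) - eta * v"

definition dlap :: "(int \<Rightarrow> real) \<Rightarrow> int \<Rightarrow> real" where
  "dlap u j = u (j - 1) - 2 * u j + u (j + 1)"

end

theory Submission
  imports Defs
begin

lemma conc_exp:
  fixes a b x :: real
  assumes "0 < a" "a < b" "0 < x"
  shows "a * (1 - exp (- b * x)) < b * (1 - exp (- a * x))"
proof -
  let ?k = "\<lambda>y. b * (1 - exp (- a * y)) - a * (1 - exp (- b * y))"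
  have "?k 0 < ?k x"
  proof (rule DERIV_pos_imp_increasing_open[OF assms(3)])
    fix y :: real assume y: "0 < y" "y < x"
    have "DERIV ?k y :> b * (a * exp (- a * y)) - a * (b * exp (- b * y))"
      by (auto intro!: derivative_eq_intros)
    moreover have "b * (a * exp (- a * y)) - a * (b * exp (- b * y)) > 0"
    proof -
      have "exp (- b * y) < exp (- a * y)" using assms y by (simp add: mult_strict_right_mono)
      then have "a*b*exp (- b * y) < a*b* exp (- a * y)" using assms by simp
      then show ?thesis by (simp add: algebra_simps)
    qed
    ultimately show "\<exists>d. DERIV ?k y :> d \<and> d > 0" by blast
  next
    show "continuous_on {0..x} ?k" by (intro continuous_intros)
  qed
  then show ?thesis by simp
qed

lemma ratio_fwd:
  fixes r P :: "int \<Rightarrow> real"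
  assumes Ppos: "\<And>j. 0 < P j" and PM: "\<And>j. P j \<le> M"
    and rB: "\<And>j. r j \<le> B"
    and cond: "\<And>j. r j > c \<Longrightarrow> P (j+1) * (r (j+1) - r j) + P (j-1) * (r (j-1) - r j) > 0"
    and ra: "r a > c" and inc: "r (a+1) > r a"
  shows False
proof -
  define Q where "Q k = P k * P (k+1) * (r (k+1) - r k)" for k
  have Qa: "Q a > 0" using Ppos inc unfolding Q_def by simp
  have M0: "M > 0" using Ppos[of 0] PM[of 0] by simp
  define d where "d = Q a / (M*M)"
  have d0: "d > 0" using Qa M0 unfolding d_def by simp
  have key: "r (a + int n) \<ge> r a + real n * d \<and> Q (a + int n) \<ge> Q a" for n
  proof (induction n)
    case 0 then show ?case by simp
  next
    case (Suc n)
    let ?k = "a + int n"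
    have rk: "r ?k > c" using Suc d0 ra by (smt (verit) mult_nonneg_nonneg of_nat_0_le_iff)
    have Qk: "Q ?k > 0" using Suc Qa by simp
    have pp: "P ?k * P (?k+1) > 0" using Ppos by simp
    have diffpos: "r (?k+1) - r ?k > 0"
      using Qk pp unfolding Q_def by (simp add: zero_less_mult_iff)
    have "Q ?k \<le> (M*M) * (r (?k+1) - r ?k)"
    proof -
      have "P ?k * P (?k+1) \<le> M * M"
        using Ppos[of ?k] PM[of ?k] Ppos[of "?k+1"] PM[of "?k+1"] by (intro mult_mono) auto
      then show ?thesis unfolding Q_def using diffpos by (simp add: mult_right_mono)
    qed
    then have "r (?k+1) - r ?k \<ge> d" unfolding d_def using M0 Suc Qa
      by (smt (verit, ccfv_SIG) divide_right_mono mult_pos_pos nonzero_mult_div_cancel_left)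
    then have A: "r (a + int (Suc n)) \<ge> r a + real (Suc n) * d"
      using Suc by (simp add: algebra_simps)
    have rk1: "r (?k+1) > c" using A rk diffpos by linarith
    have "P (?k+1+1) * (r (?k+1+1) - r (?k+1)) + P (?k+1-1) * (r (?k+1-1) - r (?k+1)) > 0"
      using cond[OF rk1] by simp
    then have "P (?k+1+1) * (r (?k+1+1) - r (?k+1)) > P ?k * (r (?k+1) - r ?k)"
      by (simp add: algebra_simps)
    then have "P (?k+1) * (P (?k+1+1) * (r (?k+1+1) - r (?k+1))) > P (?k+1) * (P ?k * (r (?k+1) - r ?k))"
      using Ppos by simp
    then have "Q (?k+1) > Q ?k" unfolding Q_def by (simp add: algebra_simps)
    then have B: "Q (a + int (Suc n)) \<ge> Q a" using Suc by (simp add: add.commute add.left_commute)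
    show ?case using A B by simp
  qed
  obtain n :: nat where "real n > (B - r a) / d" using reals_Archimedean2 by blast
  then have "real n * d > B - r a" using d0 by (simp add: field_simps)
  with key[of n] rB[of "a + int n"] show False by linarith
qed

lemma ratio_max:
  fixes r P :: "int \<Rightarrow> real"
  assumes Ppos: "\<And>j. 0 < P j" and PM: "\<And>j. P j \<le> M"
    and rB: "\<And>j. r j \<le> B"
    and cond: "\<And>j. r j > c \<Longrightarrow> P (j+1) * (r (j+1) - r j) + P (j-1) * (r (j-1) - r j) > 0"
  shows "r j \<le> c"
proof (rule ccontr)
  assume "\<not> r j \<le> c"
  then have rj: "r j > c" by simp
  show False
  proof (cases "r (j+1) > r j")
    case True
    then show False using ratio_fwd[OF Ppos PM rB cond rj] by blast
  next
    case False
    have c1: "P (j+1) * (r (j+1) - r j) \<le> 0" using False Ppos[of "j+1"]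
      by (simp add: mult_nonneg_nonpos)
    have "P (j-1) * (r (j-1) - r j) > 0" using cond[OF rj] c1 by linarith
    then have inc: "r (j-1) > r j" using Ppos[of "j-1"] by (simp add: zero_less_mult_iff)
    let ?r = "\<lambda>k. r (-k)" and ?P = "\<lambda>k. P (-k)"
    have cond': "?P (k+1) * (?r (k+1) - ?r k) + ?P (k-1) * (?r (k-1) - ?r k) > 0" if "?r k > c" for k
    proof -
      have e: "- k - 1 = -1 - k" by simp
      show ?thesis using cond[of "-k"] that unfolding e by (simp add: algebra_simps)
    qed
    show False
      by (rule ratio_fwd[of ?P M ?r B c "-j"]) (use Ppos PM rB cond' rj inc in auto)
  qed
qed

lemma int_abs_le_sq: "real_of_int \<bar>j\<bar> \<le> (real_of_int j)^2"
proof (cases "j = 0")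
  case True then show ?thesis by simp
next
  case False
  then have "1 \<le> \<bar>j\<bar>" by simp
  then have "\<bar>j\<bar> * 1 \<le> \<bar>j\<bar> * \<bar>j\<bar>" by (intro mult_left_mono) auto
  then have "\<bar>j\<bar> \<le> \<bar>j\<bar> * \<bar>j\<bar>" by simp
  then have "\<bar>j\<bar> \<le> j^2" by (simp add: power2_eq_square abs_mult[symmetric])
  then show ?thesis by (metis of_int_le_iff of_int_power)
qed

lemma comparison:
  fixes W Wd :: "real \<Rightarrow> int \<Rightarrow> real" and lam C B T :: real
  assumes lam: "0 \<le> lam" and C: "0 \<le> C"
   and cont: "\<And>j. continuous_on {0..T} (\<lambda>t. W t j)"
   and der: "\<And>j t. 0 < t \<Longrightarrow> t \<le> T \<Longrightarrow> ((\<lambda>s. W s j) has_real_derivative Wd t j) (at t)"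
   and ineq: "\<And>j t. 0 < t \<Longrightarrow> t \<le> T \<Longrightarrow> Wd t j \<ge> lam * dlap (W t) j - C * \<bar>W t j\<bar>"
   and init: "\<And>j. W 0 j \<ge> 0"
   and bdd: "\<And>t j. 0 \<le> t \<Longrightarrow> t \<le> T \<Longrightarrow> W t j \<ge> -B"
   and t: "0 \<le> t" "t \<le> T"
  shows "W t j \<ge> 0"
proof (rule ccontr)
  assume "\<not> W t j \<ge> 0"
  then have neg: "W t j < 0" by simp
  define N where "N = C + 2*lam + 1"
  have N0: "N > 0" using C lam unfolding N_def by simp
  define eps where "eps = - W t j / (2 * exp (N*T) * (1 + (real_of_int j)^2))"
  have den: "2 * exp (N*T) * (1 + (real_of_int j)^2) > 0" by (simp add: add_pos_nonneg)
  have eps0: "eps > 0" unfolding eps_def using neg den by (intro divide_pos_pos) auto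
  define psi where "psi x k = eps * exp (N*x) * (1 + (real_of_int k)^2)" for x k
  define Z where "Z s i = W s i + psi s i" for s i
  have psi_pos: "psi s i > 0" for s i unfolding psi_def using eps0 by (simp add: add_pos_nonneg)
  have "psi t j \<le> eps * exp (N*T) * (1 + (real_of_int j)^2)"
    unfolding psi_def using eps0 N0 t by (simp add: add_pos_nonneg)
  also have "\<dots> = - W t j / 2" unfolding eps_def using den by (simp add: field_simps)
  finally have Ztj: "Z t j < 0" unfolding Z_def using neg by simp
  have B0: "B > 0" using bdd[OF t, of j] neg by simp
  define J where "J = {i. eps * (1 + (real_of_int i)^2) \<le> B}"
  have finJ: "finite J"
  proof -
    have "J \<subseteq> {-(ceiling (B/eps)) .. ceiling (B/eps)}"
    proof
      fix i assume "i \<in> J"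
      then have "eps * (real_of_int i)^2 \<le> B" unfolding J_def using eps0 by (simp add: algebra_simps)
      then have "(real_of_int i)^2 \<le> B / eps" using eps0 by (simp add: field_simps)
      then have "real_of_int \<bar>i\<bar> \<le> B / eps" using int_abs_le_sq[of i] by linarith
      then have "\<bar>i\<bar> \<le> ceiling (B/eps)" by linarith
      then show "i \<in> {-(ceiling (B/eps)) .. ceiling (B/eps)}" by auto
    qed
    then show ?thesis using finite_subset by blast
  qed
  have Zpos_out: "Z s i > 0" if "0 \<le> s" "s \<le> T" "i \<notin> J" for s i
  proof -
    have "eps * (1 + (real_of_int i)^2) \<le> psi s i"
      unfolding psi_def using eps0 N0 that by (simp add: add_pos_nonneg)
    then show ?thesis using bdd[OF that(1,2), of i] that(3) unfolding Z_def J_def by simp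
  qed
  have contZ: "continuous_on {0..T} (\<lambda>s. Z s i)" for i
    unfolding Z_def psi_def by (intro continuous_intros cont)
  define S where "S = {s \<in> {0..T}. \<exists>i. Z s i \<le> 0}"
  have memS: "y \<in> S \<longleftrightarrow> 0 \<le> y \<and> y \<le> T \<and> (\<exists>i. Z y i \<le> 0)" for y
    unfolding S_def by simp
  have inS: "y \<in> S" if "0 \<le> y" "y \<le> T" "Z y i \<le> 0" for y i
    using memS that by blast
  have S_eq: "S = (\<Union>i\<in>J. {s \<in> {0..T}. Z s i \<le> 0})"
  proof
    show "S \<subseteq> (\<Union>i\<in>J. {s \<in> {0..T}. Z s i \<le> 0})"
    proof
      fix y assume "y \<in> S"
      then obtain i where i: "0 \<le> y" "y \<le> T" "Z y i \<le> 0" using memS by blast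
      have "i \<in> J"
      proof (rule ccontr)
        assume "i \<notin> J"
        then have "Z y i > 0" using Zpos_out i(1,2) by blast
        then show False using i(3) by linarith
      qed
      moreover have "y \<in> {s \<in> {0..T}. Z s i \<le> 0}" using i by simp
      ultimately show "y \<in> (\<Union>i\<in>J. {s \<in> {0..T}. Z s i \<le> 0})" by (rule UN_I)
    qed
  next
    show "(\<Union>i\<in>J. {s \<in> {0..T}. Z s i \<le> 0}) \<subseteq> S"
    proof
      fix y assume "y \<in> (\<Union>i\<in>J. {s \<in> {0..T}. Z s i \<le> 0})"
      then obtain i where "y \<in> {s \<in> {0..T}. Z s i \<le> 0}" by (rule UN_E)
      then show "y \<in> S" using inS[of y i] by simp
    qed
  qed
  have cl: "closed {s \<in> {0..T}. Z s i \<le> 0}" for i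
    using continuous_on_closed_Collect_le[OF contZ[of i] continuous_on_const[of _ 0]] by simp
  have "closed S" unfolding S_eq by (rule closed_UN[OF finJ]) (intro ballI cl)
  moreover have "bounded S"
  proof (rule bounded_subset[of "{0..T}"])
    show "S \<subseteq> {0..T}" using memS by (simp add: subset_iff)
  qed simp
  ultimately have cS: "compact S" by (simp add: compact_eq_bounded_closed)
  have tS: "t \<in> S" using inS[of t j] t Ztj by simp
  have "S \<noteq> {}" using tS by (metis empty_iff)
  from compact_attains_inf[OF cS this] obtain ts where tsS: "ts \<in> S" and tsmin: "\<And>s. s \<in> S \<Longrightarrow> ts \<le> s"
    by (elim bexE) (simp add: Ball_def)
  from tsS obtain js where ts: "0 \<le> ts" "ts \<le> T" and Zjs: "Z ts js \<le> 0" using memS by blast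
  have ts0: "ts > 0"
  proof (rule ccontr)
    assume "\<not> ts > 0"
    then have "ts = 0" using ts by simp
    then show False using Zjs init[of js] psi_pos[of 0 js] unfolding Z_def by simp
  qed
  define Dz where "Dz i = Wd ts i + eps * (N * exp (N*ts)) * (1 + (real_of_int i)^2)" for i
  have derZ: "((\<lambda>s. Z s i) has_real_derivative Dz i) (at ts)" for i
    unfolding Z_def psi_def Dz_def
    by (rule derivative_eq_intros der[OF ts0 ts(2)] | simp)+
  have before: "Z y i > 0" if "0 \<le> y" "y < ts" for y i
  proof (rule ccontr)
    assume "\<not> Z y i > 0"
    then have "y \<in> S" using inS[of y i] that ts by simp
    then show False using tsmin that by force
  qed
  have Zge: "Z ts i \<ge> 0" for i
  proof (rule ccontr)
    assume "\<not> Z ts i \<ge> 0"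
    then have lt: "Z ts i < 0" by simp
    have "isCont (\<lambda>s. Z s i) ts" using derZ by (rule DERIV_isCont)
    then have "((\<lambda>s. Z s i) \<longlongrightarrow> Z ts i) (at ts)" by (simp add: isCont_def)
    then have "eventually (\<lambda>s. Z s i < 0) (at ts)" using lt by (rule order_tendstoD)
    then obtain d where d: "d > 0" "\<And>s. s \<noteq> ts \<Longrightarrow> dist s ts < d \<Longrightarrow> Z s i < 0"
      unfolding eventually_at by blast
    define y where "y = ts - min d ts / 2"
    have y: "0 \<le> y" "y < ts" "y \<noteq> ts" "dist y ts < d" unfolding y_def dist_real_def using d ts0 by auto
    have "Z y i < 0" using d(2)[OF y(3,4)] .
    moreover have "Z y i > 0" using before[OF y(1,2)] .
    ultimately show False by simp
  qed
  have Z0: "Z ts js = 0" using Zjs Zge[of js] by simp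
  define E where "E = exp (N*ts)"
  have E0: "E > 0" unfolding E_def by simp
  have Wts: "W ts js = - (eps * E * (1 + (real_of_int js)^2))"
    using Z0 unfolding Z_def psi_def E_def by simp
  have dl: "dlap (W ts) js = (Z ts (js-1) - 2 * Z ts js + Z ts (js+1)) - 2 * eps * E"
    unfolding dlap_def Z_def psi_def E_def by (simp add: algebra_simps power2_eq_square)
  have "lam * dlap (W ts) js \<ge> - 2 * lam * eps * E"
  proof -
    have "lam * (Z ts (js - 1) - 2 * Z ts js + Z ts (js + 1)) \<ge> 0"
      using Zge[of "js-1"] Zge[of "js+1"] Z0 lam by (intro mult_nonneg_nonneg) auto
    then show ?thesis unfolding dl by (simp add: right_diff_distrib)
  qed
  then have Wd1: "Wd ts js \<ge> - 2 * lam * eps * E - C * (eps * E * (1 + (real_of_int js)^2))"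
  proof -
    have pos: "eps * E * (1 + (real_of_int js)^2) > 0" using eps0 E0 by (simp add: add_pos_nonneg)
    have "\<bar>W ts js\<bar> = eps * E * (1 + (real_of_int js)^2)" unfolding Wts using pos by simp
    then show ?thesis using ineq[OF ts0 ts(2), of js] \<open>lam * dlap (W ts) js \<ge> - 2 * lam * eps * E\<close> by simp
  qed
  have "Dz js \<ge> - 2 * lam * eps * E + (N - C) * (eps * E * (1 + (real_of_int js)^2))"
    using Wd1 unfolding Dz_def E_def by (simp add: algebra_simps)
  moreover have "(N - C) * (eps * E * (1 + (real_of_int js)^2)) \<ge> (N - C) * (eps * E)"
  proof -
    have "eps * E * 1 \<le> eps * E * (1 + (real_of_int js)^2)"
      using eps0 E0 by (intro mult_left_mono) auto
    moreover have "N - C \<ge> 0" unfolding N_def using lam by simp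
    ultimately show ?thesis by (simp add: mult_left_mono)
  qed
  moreover have "(N - C) * (eps * E) - 2 * lam * eps * E = eps * E"
    unfolding N_def by (simp add: algebra_simps)
  moreover have "eps * E > 0" using eps0 E0 by simp
  ultimately have Dpos: "Dz js > 0" by linarith
  obtain d where d: "d > 0" "\<And>h. h > 0 \<Longrightarrow> h < d \<Longrightarrow> Z (ts - h) js < Z ts js"
    using DERIV_pos_inc_left[OF derZ Dpos] by blast
  define h where "h = min d ts / 2"
  have "h > 0" "h < d" "h \<le> ts" unfolding h_def using d ts0 by auto
  then have y: "Z (ts - h) js < 0" "0 \<le> ts - h" "ts - h < ts" using d Z0 by auto
  have "Z (ts - h) js > 0" using before[OF y(2,3)] .
  then show False using y(1) by simp
qed

lemma limsup_ex:
  fixes g :: "real \<Rightarrow> real"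
  assumes bd: "\<And>t. 0 \<le> t \<Longrightarrow> \<bar>g t\<bar> \<le> K"
  shows "\<exists>U. (\<forall>e>0. \<exists>T. \<forall>t\<ge>T. g t \<le> U + e) \<and> (\<forall>e>0. \<forall>T. \<exists>t\<ge>T. g t > U - e)"
proof -
  define A where "A = {s. \<exists>T. \<forall>t\<ge>T. g t \<le> s}"
  have KA: "K \<in> A" unfolding A_def using bd by (intro CollectI exI[of _ 0]) (auto simp: abs_le_iff)
  then have Ane: "A \<noteq> {}" by (metis empty_iff)
  have bb: "bdd_below A"
  proof (rule bdd_belowI)
    fix s assume "s \<in> A"
    then obtain T where T: "\<And>t. t \<ge> T \<Longrightarrow> g t \<le> s" unfolding A_def by blast
    have "g (max T 0) \<le> s" using T by simp
    moreover have "\<bar>g (max T 0)\<bar> \<le> K" using bd by simp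
    ultimately show "- K \<le> s" by linarith
  qed
  define U where "U = Inf A"
  have P1: "\<exists>T. \<forall>t\<ge>T. g t \<le> U + e" if e: "e > 0" for e
  proof -
    have "Inf A < U + e" unfolding U_def using e by simp
    then obtain s where "s \<in> A" "s < U + e" using cInf_less_iff[OF Ane bb] by blast
    then obtain T where "\<And>t. t \<ge> T \<Longrightarrow> g t \<le> s" unfolding A_def by blast
    then show ?thesis using \<open>s < U + e\<close> by (meson less_imp_le order_trans)
  qed
  have P2: "\<exists>t\<ge>T. g t > U - e" if e: "e > 0" for e T
  proof (rule ccontr)
    assume "\<not> (\<exists>t\<ge>T. g t > U - e)"
    then have "\<forall>t\<ge>T. g t \<le> U - e" by (simp add: not_less)
    then have "U - e \<in> A" unfolding A_def by blast
    then have "U \<le> U - e" unfolding U_def by (rule cInf_lower[OF _ bb])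
    then show False using e by simp
  qed
  show ?thesis using P1 P2 by blast
qed

lemma mono_part:
  fixes g D :: "real \<Rightarrow> real"
  assumes "s \<le> b" "continuous_on {s..b} g"
   "\<And>x. s < x \<Longrightarrow> x < b \<Longrightarrow> (g has_real_derivative D x) (at x)"
   "\<And>x. s < x \<Longrightarrow> x < b \<Longrightarrow> D x \<le> -del"
  shows "g s \<ge> g b + del*(b-s)"
proof -
  have "(\<lambda>x. g x + del * x) s \<ge> (\<lambda>x. g x + del * x) b"
  proof (rule DERIV_nonpos_imp_decreasing_open[OF assms(1)])
    fix x assume x: "s < x" "x < b"
    have "((\<lambda>x. g x + del * x) has_real_derivative D x + del) (at x)"
      by (rule derivative_eq_intros assms(3)[OF x] | simp)+
    then show "\<exists>y. ((\<lambda>x. g x + del * x) has_real_derivative y) (at x) \<and> y \<le> 0"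
      using assms(4)[OF x] by force
  next
    show "continuous_on {s..b} (\<lambda>x. g x + del * x)" by (intro continuous_intros assms(2))
  qed
  then show ?thesis by (simp add: algebra_simps)
qed

lemma down:
  fixes g D :: "real \<Rightarrow> real"
  assumes ab: "a \<le> b" and gc: "continuous_on {a..b} g"
   and der: "\<And>x. a < x \<Longrightarrow> x < b \<Longrightarrow> (g has_real_derivative D x) (at x)"
   and neg: "\<And>x. a < x \<Longrightarrow> x < b \<Longrightarrow> g x > c \<Longrightarrow> D x \<le> -del"
   and gb: "g b > c" and del: "del \<ge> 0"
  shows "g a \<ge> g b + del*(b-a)"
proof -
  define S where "S = {x \<in> {a..b}. g x \<le> c}"
  show ?thesis
  proof (cases "S = {}")
    case True
    have "g x > c" if "a < x" "x < b" for x
    proof (rule ccontr)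
      assume "\<not> g x > c"
      then have "x \<in> S" unfolding S_def using that by simp
      then show False using True by simp
    qed
    then show ?thesis using mono_part[OF ab gc der, of del] neg by blast
  next
    case False
    have "closed S" unfolding S_def
      using continuous_on_closed_Collect_le[OF gc continuous_on_const[of _ c]] by simp
    moreover have "bounded S" by (rule bounded_subset[of "{a..b}"]) (auto simp: S_def)
    ultimately have "compact S" by (simp add: compact_eq_bounded_closed)
    from compact_attains_sup[OF this False] obtain s where sS: "s \<in> S" and smax: "\<And>x. x \<in> S \<Longrightarrow> x \<le> s"
      by (elim bexE) (simp add: Ball_def)
    have s: "a \<le> s" "s \<le> b" "g s \<le> c" using sS unfolding S_def by auto
    have sb: "s \<le> b" using s by simp
    have gt: "g x > c" if "s < x" "x < b" for x
    proof (rule ccontr)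
      assume "\<not> g x > c"
      then have "x \<in> S" unfolding S_def using that s by simp
      then show False using smax that by force
    qed
    have "g s \<ge> g b + del*(b-s)"
    proof (rule mono_part[OF sb])
      show "continuous_on {s..b} g" using continuous_on_subset[OF gc] s by simp
      show "\<And>x. s < x \<Longrightarrow> x < b \<Longrightarrow> (g has_real_derivative D x) (at x)" using der s by simp
      show "\<And>x. s < x \<Longrightarrow> x < b \<Longrightarrow> D x \<le> -del" using neg gt s by simp
    qed
    moreover have "del*(b-s) \<ge> 0" using del sb by simp
    ultimately show ?thesis using s gb by linarith
  qed
qed

lemma limsup_sub:
  fixes g p q G :: "real \<Rightarrow> real"
  assumes lam: "0 < lam" and Gc: "isCont G U"
   and gc: "continuous_on {0..} g"
   and der: "\<And>t. 0 < t \<Longrightarrow> (g has_real_derivative (G (g t) + lam*(p t + q t))) (at t)"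
   and U1: "\<forall>e>0. \<exists>T. \<forall>t\<ge>T. g t \<le> U + e"
   and U2: "\<forall>e>0. \<forall>T. \<exists>t\<ge>T. g t > U - e"
   and P1: "\<forall>e>0. \<exists>T. \<forall>t\<ge>T. p t \<le> Up + e"
   and Q1: "\<forall>e>0. \<exists>T. \<forall>t\<ge>T. q t \<le> Uq + e"
  shows "G U + lam*(Up + Uq) \<ge> 0"
proof (rule ccontr)
  assume "\<not> G U + lam*(Up + Uq) \<ge> 0"
  define del where "del = - (G U + lam*(Up + Uq)) / 3"
  have del0: "del > 0" unfolding del_def using \<open>\<not> _\<close> by simp
  from Gc have "G \<midarrow>U\<rightarrow> G U" by (simp add: isCont_def)
  then obtain eta where eta: "eta > 0" and etaG: "\<And>v. v \<noteq> U \<Longrightarrow> norm (v - U) < eta \<Longrightarrow> norm (G v - G U) < del"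
    using del0 unfolding LIM_eq by blast
  have etaG': "G v < G U + del" if "\<bar>v - U\<bar> < eta" for v
  proof (cases "v = U")
    case True then show ?thesis using del0 by simp
  next
    case False then show ?thesis using etaG[of v] that by auto
  qed
  define ep where "ep = del / (2*lam)"
  have ep0: "ep > 0" unfolding ep_def using del0 lam by simp
  obtain T1 where T1: "\<And>t. t \<ge> T1 \<Longrightarrow> p t \<le> Up + ep" using P1 ep0 by blast
  obtain T2 where T2: "\<And>t. t \<ge> T2 \<Longrightarrow> q t \<le> Uq + ep" using Q1 ep0 by blast
  obtain T3 where T3: "\<And>t. t \<ge> T3 \<Longrightarrow> g t \<le> U + eta/2" using U1 eta by (meson half_gt_zero)
  define T where "T = max (max T1 T2) (max T3 1)"
  have T: "T \<ge> T1" "T \<ge> T2" "T \<ge> T3" "T \<ge> 1" unfolding T_def by auto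
  define D where "D t = G (g t) + lam*(p t + q t)" for t
  have Dneg: "D t \<le> -del" if "t \<ge> T" "g t > U - eta" for t
  proof -
    have "g t \<le> U + eta/2" using T3 T that by simp
    then have "\<bar>g t - U\<bar> < eta" using that eta by simp
    then have a: "G (g t) < G U + del" by (rule etaG')
    have "p t \<le> Up + ep" using T1[of t] T that by simp
    moreover have "q t \<le> Uq + ep" using T2[of t] T that by simp
    ultimately have "p t + q t \<le> Up + Uq + 2*ep" by simp
    then have "lam*(p t + q t) \<le> lam*(Up + Uq + 2*ep)" using lam by (simp add: mult_left_mono)
    also have "\<dots> = lam*(Up+Uq) + del" unfolding ep_def using lam by (simp add: field_simps)
    finally have b: "lam*(p t + q t) \<le> lam*(Up+Uq) + del" .
    have c: "G U + lam*(Up + Uq) = -3*del" unfolding del_def by simp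
    show ?thesis unfolding D_def using a b c by linarith
  qed
  obtain t0 where t0: "t0 \<ge> T + 2*eta/del" and gt0: "g t0 > U - eta/2"
    using U2 eta by (meson half_gt_zero)
  have Tt0: "T \<le> t0" using t0 eta del0 by (smt (verit) divide_pos_pos)
  have "g T \<ge> g t0 + del*(t0 - T)"
  proof (rule down[OF Tt0, where c = "U - eta" and D = D])
    show "continuous_on {T..t0} g" using continuous_on_subset[OF gc] T by auto
    show "\<And>x. T < x \<Longrightarrow> x < t0 \<Longrightarrow> (g has_real_derivative D x) (at x)"
      unfolding D_def using der T by simp
    show "\<And>x. T < x \<Longrightarrow> x < t0 \<Longrightarrow> g x > U - eta \<Longrightarrow> D x \<le> -del" using Dneg by simp
    show "g t0 > U - eta" using gt0 eta by simp
    show "del \<ge> 0" using del0 by simp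
  qed
  moreover have "del*(t0 - T) \<ge> 2*eta"
  proof -
    have "t0 - T \<ge> 2*eta/del" using t0 by simp
    then show ?thesis using del0 by (simp add: field_simps)
  qed
  moreover have "g T \<le> U + eta/2" using T3 T by simp
  ultimately show False using gt0 eta by linarith
qed

lemma exp_diff:
  fixes tau x y :: real
  assumes "0 < tau" "0 \<le> x" "x \<le> y"
  shows "0 \<le> exp (-tau*x) - exp (-tau*y) \<and> exp (-tau*x) - exp (-tau*y) \<le> tau * (y - x)"
proof -
  have e: "exp (-tau*y) = exp (-tau*x) * exp (-(tau*(y-x)))" by (simp add: exp_add[symmetric] algebra_simps)
  have "exp (-(tau*(y-x))) \<le> 1" using assms by simp
  moreover have "1 - tau*(y-x) \<le> exp (-(tau*(y-x)))" using exp_ge_add_one_self[of "-(tau*(y-x))"] by simp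
  moreover have "exp (-tau*x) \<le> 1" using assms by simp
  moreover have "exp (-tau*x) > 0" by simp
  moreover have "tau*(y-x) \<ge> 0" using assms by simp
  ultimately have "0 \<le> exp (-tau*x) * (1 - exp (-(tau*(y-x)))) \<and> exp (-tau*x) * (1 - exp (-(tau*(y-x)))) \<le> tau*(y-x)"
    by (smt (verit, best) mult_left_le_one_le mult_nonneg_nonneg)
  then show ?thesis unfolding e by (simp add: algebra_simps)
qed

lemma reac_lip:
  assumes tau: "0 < tau" and s0: "0 \<le> s0" and eta: "0 \<le> eta" and x: "0 \<le> x" and y: "0 \<le> y"
  shows "\<bar>reac s0 tau eta x - reac s0 tau eta y\<bar> \<le> (s0*tau + eta) * \<bar>x - y\<bar>"
proof -
  have main: "\<bar>reac s0 tau eta a - reac s0 tau eta b\<bar> \<le> (s0*tau + eta) * \<bar>a - b\<bar>" if "0 \<le> a" "a \<le> b" for a b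
  proof -
    have d: "0 \<le> exp (-tau*a) - exp (-tau*b)" "exp (-tau*a) - exp (-tau*b) \<le> tau * (b - a)"
      using exp_diff[OF tau that] by auto
    have r: "reac s0 tau eta a - reac s0 tau eta b = - s0 * (exp (-tau*a) - exp (-tau*b)) + eta * (b - a)"
      unfolding reac_def by (simp add: algebra_simps)
    have "s0 * (exp (-tau*a) - exp (-tau*b)) \<le> s0 * (tau * (b - a))" using d s0 by (simp add: mult_left_mono)
    moreover have "s0 * (exp (-tau*a) - exp (-tau*b)) \<ge> 0" using d s0 by simp
    moreover have "eta * (b - a) \<ge> 0" using eta that by simp
    ultimately show ?thesis unfolding r using that by (simp add: abs_le_iff algebra_simps)
  qed
  show ?thesis
  proof (cases "x \<le> y")
    case True then show ?thesis using main[OF x True] by simp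
  next
    case False then show ?thesis using main[OF y, of x] by (simp add: abs_minus_commute)
  qed
qed

lemma reac_lb:
  assumes tau: "0 < tau" and s0: "0 \<le> s0" and eta: "0 \<le> eta" and v: "-B \<le> v"
  shows "reac s0 tau eta v \<ge> -(s0*tau*exp(tau*B) + eta) * \<bar>v\<bar>"
proof (cases "v \<ge> 0")
  case True
  have "exp (-tau* v) \<le> 1" using tau True by simp
  then have "s0 * (1 - exp (-tau* v)) \<ge> 0" using s0 by simp
  moreover have "s0*tau*exp(tau*B) * \<bar>v\<bar> \<ge> 0" using s0 tau by simp
  ultimately show ?thesis unfolding reac_def using True by (simp add: algebra_simps)
next
  case False
  define x where "x = - tau * v"
  have x0: "x \<ge> 0" unfolding x_def using False tau by (simp add: mult_nonneg_nonpos)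
  have "1 - x \<le> exp (-x)" using exp_ge_add_one_self[of "-x"] by simp
  then have "exp x * (1 - x) \<le> exp x * exp (-x)" by (simp add: mult_left_mono)
  then have a: "1 - exp x \<ge> - x * exp x" by (simp add: exp_minus algebra_simps)
  have "tau * (-v) \<le> tau * B" using v tau by (intro mult_left_mono) auto
  then have "x \<le> tau * B" unfolding x_def by simp
  then have "exp x \<le> exp (tau*B)" by simp
  then have "x * exp x \<le> x * exp (tau*B)" using x0 by (simp add: mult_left_mono)
  then have b: "1 - exp x \<ge> - x * exp (tau*B)" using a by linarith
  have A: "s0 * (1 - exp x) \<ge> s0 * (- x * exp (tau*B))" using b s0 by (intro mult_left_mono) auto
  have xv: "x = tau * \<bar>v\<bar>" unfolding x_def using False by simp
  have E: "- eta * v \<ge> - eta * \<bar>v\<bar>" using eta False by (simp add: mult_nonneg_nonpos)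
  have r: "reac s0 tau eta v = s0*(1 - exp x) + (- eta * v)" unfolding reac_def x_def by simp
  have c: "s0 * (- x * exp (tau*B)) = - (s0*tau*exp(tau*B)) * \<bar>v\<bar>" unfolding xv by simp
  have d: "-(s0*tau*exp(tau*B) + eta) * \<bar>v\<bar> = - (s0*tau*exp(tau*B)) * \<bar>v\<bar> + (- eta * \<bar>v\<bar>)"
    by (simp add: algebra_simps)
  show ?thesis unfolding r d using A c E by linarith
qed

lemma reac_conc_gt:
  assumes tau: "0 < tau" and s0: "0 < s0" and r: "1 < r" and v: "0 < v"
  shows "reac s0 tau eta (r* v) < r * reac s0 tau eta v"
proof -
  have "1 * (1 - exp (- r * (tau* v))) < r * (1 - exp (- 1 * (tau* v)))"
    using conc_exp[of 1 r "tau* v"] r tau v by simp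
  then have h: "(1 - exp (- tau * (r* v))) < (r * (1 - exp (- tau * v)))"
    by (simp add: algebra_simps)
  have "s0 * (1 - exp (- tau * (r* v))) < s0 * (r * (1 - exp (- tau * v)))"
    by (rule mult_strict_left_mono[OF h s0])
  then show ?thesis unfolding reac_def by (simp add: algebra_simps)
qed

lemma reac_conc_lt:
  assumes tau: "0 < tau" and s0: "0 < s0" and r: "0 < r" "r < 1" and v: "0 < v"
  shows "reac s0 tau eta (r* v) > r * reac s0 tau eta v"
proof -
  have "r * (1 - exp (- 1 * (tau* v))) < 1 * (1 - exp (- r * (tau* v)))"
    using conc_exp[of r 1 "tau* v"] r tau v by simp
  then have h: "(r * (1 - exp (- tau * v))) < (1 - exp (- tau * (r* v)))"
    by (simp add: algebra_simps)
  have "s0 * (r * (1 - exp (- tau * v))) < s0 * (1 - exp (- tau * (r* v)))"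
    by (rule mult_strict_left_mono[OF h s0])
  then show ?thesis unfolding reac_def by (simp add: algebra_simps)
qed

lemma reac_conc_ge:
  assumes tau: "0 < tau" and s0: "0 < s0" and r: "1 \<le> r" and v: "0 \<le> v"
  shows "reac s0 tau eta (r* v) \<le> r * reac s0 tau eta v"
proof (cases "r = 1 \<or> v = 0")
  case True then show ?thesis unfolding reac_def by auto
next
  case False then show ?thesis using reac_conc_gt[OF tau s0, of r v eta] r v by simp
qed

lemma reac_0: "reac s0 tau eta 0 = 0" unfolding reac_def by simp

lemma reac_cont: "isCont (reac s0 tau eta) v" unfolding reac_def by (intro continuous_intros)

theorem theorem2:
  fixes s0 tau eta lam :: real
    and I0 :: "int \<Rightarrow> real"
    and Iinf :: "int \<Rightarrow> real"
    and u0 :: "int \<Rightarrow> real"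
    and I :: "real \<Rightarrow> int \<Rightarrow> real"
  assumes s0: "0 < s0" "s0 < 1"
    and pars: "0 < tau" "0 < eta" "0 < lam"
    and I0_fin: "finite {j. I0 j \<noteq> 0}"
    and I0_range: "\<And>j. 0 \<le> I0 j \<and> I0 j < 1"
    and I0_pos: "\<exists>j. 0 < I0 j"
    \<comment> \<open>the (unique) positive bounded stationary solution\<close>
    and Iinf_pos: "\<And>j. 0 < Iinf j"
    and Iinf_bdd: "bounded (range Iinf)"
    and Iinf_eq: "\<And>j. 0 = reac s0 tau eta (Iinf j) + I0 j + lam * dlap Iinf j"
    \<comment> \<open>nonnegative, bounded, finitely supported initial condition\<close>
    and u0_nonneg: "\<And>j. 0 \<le> u0 j"
    and u0_bdd: "bounded (range u0)"
    and u0_fin: "finite {j. u0 j \<noteq> 0}"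
    \<comment> \<open>I is the solution (bounded on bounded time intervals, as a solution in l-infinity)\<close>
    and I_init: "\<And>j. I 0 j = u0 j"
    and I_cont: "\<And>j. continuous_on {0..} (\<lambda>t. I t j)"
    and I_ode: "\<And>j t. 0 < t \<Longrightarrow>
        ((\<lambda>s. I s j) has_real_derivative
           (reac s0 tau eta (I t j) + I0 j + lam * dlap (I t) j)) (at t)"
    and I_locbdd: "\<And>T. 0 \<le> T \<Longrightarrow> bounded ((\<lambda>(t, j). I t j) ` ({0..T} \<times> UNIV))"
  shows "\<forall>K::nat. \<forall>e>0. \<exists>T. \<forall>t\<ge>T. \<forall>j. \<bar>j\<bar> \<le> int K \<longrightarrow> \<bar>I t j - Iinf j\<bar> < e"
proof -
  have tau: "0 < tau" and eta: "0 < eta" and lam: "0 < lam" using pars by auto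
  have s0p: "0 < s0" using s0 by simp
  have I0nn: "\<And>j. 0 \<le> I0 j" using I0_range by simp
  have locb: "\<exists>B\<ge>0. \<forall>t j. 0 \<le> t \<longrightarrow> t \<le> T \<longrightarrow> \<bar>I t j\<bar> \<le> B" if T: "0 \<le> T" for T
  proof -
    obtain a where a: "\<forall>x\<in>(\<lambda>(t, j). I t j) ` ({0..T} \<times> UNIV). norm x \<le> a"
      using I_locbdd[OF T] unfolding bounded_iff by blast
    have "\<bar>I t j\<bar> \<le> a" if "0 \<le> t" "t \<le> T" for t j
    proof -
      have "I t j \<in> (\<lambda>(t, j). I t j) ` ({0..T} \<times> UNIV)" using that by force
      then show ?thesis using a by auto
    qed
    moreover have "a \<ge> 0" using calculation[of 0 0] T by force
    ultimately show ?thesis by blast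
  qed
  have contT: "continuous_on {0..T} (\<lambda>t. I t j)" for T j
    using continuous_on_subset[OF I_cont[of j]] by auto
  obtain M where M: "\<And>j. \<bar>Iinf j\<bar> \<le> M"
    using Iinf_bdd unfolding bounded_iff by auto
  have Inn: "I t j \<ge> 0" if t: "0 \<le> t" for t j
  proof -
    obtain B where B0: "B \<ge> 0" and Bb': "\<forall>s i. 0 \<le> s \<longrightarrow> s \<le> t \<longrightarrow> \<bar>I s i\<bar> \<le> B"
      using locb[OF t] by blast
    have Bb: "\<And>s i. 0 \<le> s \<Longrightarrow> s \<le> t \<Longrightarrow> \<bar>I s i\<bar> \<le> B" using Bb' by blast
    define C where "C = s0*tau*exp(tau*B) + eta"
    show ?thesis
    proof (rule comparison[where W = I and Wd = "\<lambda>s i. reac s0 tau eta (I s i) + I0 i + lam * dlap (I s) i"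
          and lam = lam and C = C and B = B and T = t])
      show "0 \<le> lam" using lam by simp
      show "0 \<le> C" unfolding C_def using s0p tau eta by simp
      show "\<And>j. continuous_on {0..t} (\<lambda>s. I s j)" by (rule contT)
      show "\<And>j s. 0 < s \<Longrightarrow> s \<le> t \<Longrightarrow> ((\<lambda>s. I s j) has_real_derivative reac s0 tau eta (I s j) + I0 j + lam * dlap (I s) j) (at s)"
        using I_ode by blast
      show "\<And>j s. 0 < s \<Longrightarrow> s \<le> t \<Longrightarrow> reac s0 tau eta (I s j) + I0 j + lam * dlap (I s) j \<ge> lam * dlap (I s) j - C * \<bar>I s j\<bar>"
      proof -
        fix j s assume "0 < s" "s \<le> t"
        then have "-B \<le> I s j" using Bb[of s j] by auto
        then have "reac s0 tau eta (I s j) \<ge> - C * \<bar>I s j\<bar>"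
          unfolding C_def using reac_lb[OF tau] s0p eta by simp
        then show "reac s0 tau eta (I s j) + I0 j + lam * dlap (I s) j \<ge> lam * dlap (I s) j - C * \<bar>I s j\<bar>"
          using I0nn[of j] by simp
      qed
      show "\<And>j. 0 \<le> I 0 j" using I_init u0_nonneg by simp
      show "\<And>s j. 0 \<le> s \<Longrightarrow> s \<le> t \<Longrightarrow> - B \<le> I s j"
      proof -
        fix s j assume "0 \<le> s" "s \<le> t"
        then have "\<bar>I s j\<bar> \<le> B" by (rule Bb)
        then show "- B \<le> I s j" by linarith
      qed
    qed (use t in auto)
  qed
  define Su where "Su = {j. u0 j \<noteq> 0}"
  define al where "al = 1 + (\<Sum>j\<in>Su. u0 j / Iinf j)"
  have sumnn: "(\<Sum>j\<in>Su. u0 j / Iinf j) \<ge> 0"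
    using u0_nonneg Iinf_pos by (intro sum_nonneg) (simp add: less_imp_le)
  have al1: "al \<ge> 1" unfolding al_def using sumnn by simp
  have u0le: "u0 j \<le> al * Iinf j" for j
  proof (cases "j \<in> Su")
    case True
    have "u0 j / Iinf j \<le> (\<Sum>j\<in>Su. u0 j / Iinf j)"
      using True u0_fin u0_nonneg Iinf_pos unfolding Su_def
      by (intro member_le_sum) (auto simp: less_imp_le)
    then have "u0 j / Iinf j \<le> al" unfolding al_def by simp
    then show ?thesis using Iinf_pos[of j] by (simp add: divide_le_eq mult.commute)
  next
    case False
    then have "u0 j = 0" unfolding Su_def by simp
    then show ?thesis using al1 Iinf_pos[of j] by simp
  qed
  define C where "C = s0*tau + eta"
  have Iup: "I t j \<le> al * Iinf j" if t: "0 \<le> t" for t j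
  proof -
    obtain B where B0: "B \<ge> 0" and Bb': "\<forall>s i. 0 \<le> s \<longrightarrow> s \<le> t \<longrightarrow> \<bar>I s i\<bar> \<le> B"
      using locb[OF t] by blast
    have Bb: "\<And>s i. 0 \<le> s \<Longrightarrow> s \<le> t \<Longrightarrow> \<bar>I s i\<bar> \<le> B" using Bb' by blast
    have "0 \<le> al * Iinf j - I t j"
    proof (rule comparison[where W = "\<lambda>s i. al * Iinf i - I s i"
          and Wd = "\<lambda>s i. - (reac s0 tau eta (I s i) + I0 i + lam * dlap (I s) i)"
          and lam = lam and C = C and B = B and T = t])
      show "0 \<le> lam" using lam by simp
      show "0 \<le> C" unfolding C_def using s0p tau eta by simp
      show "\<And>j. continuous_on {0..t} (\<lambda>s. al * Iinf j - I s j)"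
        by (intro continuous_intros contT)
      show "\<And>j s. 0 < s \<Longrightarrow> s \<le> t \<Longrightarrow> ((\<lambda>s. al * Iinf j - I s j) has_real_derivative
               - (reac s0 tau eta (I s j) + I0 j + lam * dlap (I s) j)) (at s)"
        using DERIV_diff[OF DERIV_const I_ode] by simp
      show "\<And>j s. 0 < s \<Longrightarrow> s \<le> t \<Longrightarrow> - (reac s0 tau eta (I s j) + I0 j + lam * dlap (I s) j)
              \<ge> lam * dlap (\<lambda>i. al * Iinf i - I s i) j - C * \<bar>al * Iinf j - I s j\<bar>"
      proof -
        fix j s assume s: "0 < s" "s \<le> t"
        have Isn: "I s j \<ge> 0" using Inn s by simp
        have An: "al * Iinf j \<ge> 0" using al1 Iinf_pos[of j] by simp
        have dl: "lam * dlap (\<lambda>i. al * Iinf i - I s i) j = al * (lam * dlap Iinf j) - lam * dlap (I s) j"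
          unfolding dlap_def by (simp add: algebra_simps)
        have eq: "lam * dlap Iinf j = - reac s0 tau eta (Iinf j) - I0 j" using Iinf_eq[of j] by simp
        have c1: "reac s0 tau eta (al * Iinf j) \<le> al * reac s0 tau eta (Iinf j)"
          using reac_conc_ge[OF tau s0p al1] Iinf_pos[of j] by (simp add: less_imp_le)
        have c2: "\<bar>reac s0 tau eta (al * Iinf j) - reac s0 tau eta (I s j)\<bar> \<le> C * \<bar>al * Iinf j - I s j\<bar>"
          unfolding C_def using reac_lip[OF tau _ _ An Isn] s0p eta by simp
        have c3: "(al - 1) * I0 j \<ge> 0" using al1 I0nn[of j] by simp
        show "- (reac s0 tau eta (I s j) + I0 j + lam * dlap (I s) j)
              \<ge> lam * dlap (\<lambda>i. al * Iinf i - I s i) j - C * \<bar>al * Iinf j - I s j\<bar>"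
          unfolding dl eq using c1 c2 c3 by (simp add: algebra_simps abs_le_iff)
      qed
      show "\<And>j. 0 \<le> al * Iinf j - I 0 j" using I_init u0le by simp
      show "\<And>s j. 0 \<le> s \<Longrightarrow> s \<le> t \<Longrightarrow> - B \<le> al * Iinf j - I s j"
      proof -
        fix s j assume "0 \<le> s" "s \<le> t"
        then have "\<bar>I s j\<bar> \<le> B" by (rule Bb)
        moreover have "al * Iinf j \<ge> 0" using al1 Iinf_pos[of j] by simp
        ultimately show "- B \<le> al * Iinf j - I s j" by linarith
      qed
    qed (use t in auto)
    then show ?thesis by simp
  qed
  have gb: "\<bar>I t j\<bar> \<le> al * M" if "0 \<le> t" for t j
  proof -
    have "Iinf j \<le> M" using M[of j] by simp
    then have "al * Iinf j \<le> al * M" using al1 by simp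
    then show ?thesis using Inn[OF that, of j] Iup[OF that, of j] by simp
  qed
  define PU where "PU j u = ((\<forall>e>0. \<exists>T. \<forall>t\<ge>T. I t j \<le> u + e) \<and> (\<forall>e>0. \<forall>T. \<exists>t\<ge>T. I t j > u - e))" for j u
  define PV where "PV j u = ((\<forall>e>0. \<exists>T. \<forall>t\<ge>T. - I t j \<le> u + e) \<and> (\<forall>e>0. \<forall>T. \<exists>t\<ge>T. - I t j > u - e))" for j u
  define U where "U j = (SOME u. PU j u)" for j
  define V where "V j = (SOME u. PV j u)" for j
  define L where "L j = - V j" for j
  have PU: "PU j (U j)" for j
  proof -
    have "\<exists>u. PU j u" unfolding PU_def by (rule limsup_ex[of "\<lambda>t. I t j" "al * M"]) (use gb in auto)
    then show ?thesis unfolding U_def by (rule someI_ex)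
  qed
  have PV: "PV j (V j)" for j
  proof -
    have "\<exists>u. PV j u" unfolding PV_def by (rule limsup_ex[of "\<lambda>t. - I t j" "al * M"]) (use gb in auto)
    then show ?thesis unfolding V_def by (rule someI_ex)
  qed
  have U1: "\<forall>e>0. \<exists>T. \<forall>t\<ge>T. I t j \<le> U j + e" for j using PU[of j] unfolding PU_def by blast
  have U2: "\<forall>e>0. \<forall>T. \<exists>t\<ge>T. I t j > U j - e" for j using PU[of j] unfolding PU_def by blast
  have V1: "\<forall>e>0. \<exists>T. \<forall>t\<ge>T. - I t j \<le> V j + e" for j using PV[of j] unfolding PV_def by blast
  have V2: "\<forall>e>0. \<forall>T. \<exists>t\<ge>T. - I t j > V j - e" for j using PV[of j] unfolding PV_def by blast
  have Usub: "reac s0 tau eta (U j) + I0 j + lam * dlap U j \<ge> 0" for j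
  proof -
    have "(\<lambda>v. reac s0 tau eta v + I0 j - 2*lam* v) (U j) + lam * (U (j-1) + U (j+1)) \<ge> 0"
    proof (rule limsup_sub[where g = "\<lambda>t. I t j" and p = "\<lambda>t. I t (j-1)" and q = "\<lambda>t. I t (j+1)" and G = "\<lambda>v. reac s0 tau eta v + I0 j - 2*lam* v" and U = "U j" and Up = "U (j-1)" and Uq = "U (j+1)"])
      show "0 < lam" by (rule lam)
      show "isCont (\<lambda>v. reac s0 tau eta v + I0 j - 2*lam* v) (U j)"
        unfolding reac_def by (intro continuous_intros)
      show "continuous_on {0..} (\<lambda>t. I t j)" by (rule I_cont)
      show "((\<lambda>t. I t j) has_real_derivative (\<lambda>v. reac s0 tau eta v + I0 j - 2*lam* v) (I t j) + lam * (I t (j-1) + I t (j+1))) (at t)"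
        if "0 < t" for t
      proof -
        have eq: "reac s0 tau eta (I t j) + I0 j + lam * dlap (I t) j = (\<lambda>v. reac s0 tau eta v + I0 j - 2*lam* v) (I t j) + lam * (I t (j-1) + I t (j+1))"
          unfolding dlap_def by (simp add: algebra_simps)
        show ?thesis using I_ode[OF that, of j] unfolding eq .
      qed
    qed (use U1 U2 in auto)
    then show ?thesis unfolding dlap_def by (simp add: algebra_simps)
  qed
  have Lsup: "reac s0 tau eta (L j) + I0 j + lam * dlap L j \<le> 0" for j
  proof -
    have "(\<lambda>w. - reac s0 tau eta (-w) - I0 j - 2*lam*w) (V j) + lam * (V (j-1) + V (j+1)) \<ge> 0"
    proof (rule limsup_sub[where g = "\<lambda>t. - I t j" and p = "\<lambda>t. - I t (j-1)" and q = "\<lambda>t. - I t (j+1)" and G = "\<lambda>w. - reac s0 tau eta (-w) - I0 j - 2*lam*w" and U = "V j" and Up = "V (j-1)" and Uq = "V (j+1)"])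
      show "0 < lam" by (rule lam)
      show "isCont (\<lambda>w. - reac s0 tau eta (-w) - I0 j - 2*lam*w) (V j)"
        unfolding reac_def by (intro continuous_intros)
      show "continuous_on {0..} (\<lambda>t. - I t j)" by (intro continuous_intros I_cont)
      show "((\<lambda>t. - I t j) has_real_derivative (\<lambda>w. - reac s0 tau eta (-w) - I0 j - 2*lam*w) (- I t j) + lam * (- I t (j-1) + - I t (j+1))) (at t)"
        if "0 < t" for t
      proof -
        have eq: "- (reac s0 tau eta (I t j) + I0 j + lam * dlap (I t) j) = (\<lambda>w. - reac s0 tau eta (-w) - I0 j - 2*lam*w) (- I t j) + lam * (- I t (j-1) + - I t (j+1))"
          unfolding dlap_def by (simp add: algebra_simps)
        show ?thesis using DERIV_minus[OF I_ode[OF that, of j]] unfolding eq .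
      qed
    qed (use V1 V2 in auto)
    then show ?thesis unfolding dlap_def L_def by (simp add: algebra_simps)
  qed
  have Uub: "U j \<le> al * Iinf j" for j
  proof (rule ccontr)
    assume "\<not> U j \<le> al * Iinf j"
    then have "U j - al * Iinf j > 0" by simp
    then obtain t where "t \<ge> 0" "I t j > U j - (U j - al * Iinf j)" using U2[of j] by blast
    then show False using Iup[of t j] by simp
  qed
  have Lnn: "L j \<ge> 0" for j
  proof (rule ccontr)
    assume "\<not> L j \<ge> 0"
    then have "V j > 0" unfolding L_def by simp
    then obtain t where "t \<ge> 0" "- I t j > V j - V j" using V2[of j] by blast
    then show False using Inn[of t j] by simp
  qed
  have zprop: "L (k-1) = 0 \<and> L (k+1) = 0 \<and> I0 k = 0" if "L k = 0" for k
  proof -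
    have "reac s0 tau eta (L k) + I0 k + lam * dlap L k \<le> 0" by (rule Lsup)
    then have "I0 k + lam * (L (k-1) + L (k+1)) \<le> 0" using that unfolding dlap_def by (simp add: reac_0)
    moreover have "L (k-1) + L (k+1) \<ge> 0" using Lnn by (simp add: add_nonneg_nonneg)
    moreover have "lam * (L (k-1) + L (k+1)) \<ge> 0" using lam calculation(2) by simp
    ultimately have "I0 k = 0" "lam * (L (k-1) + L (k+1)) = 0" using I0nn[of k] by linarith+
    then have "L (k-1) + L (k+1) = 0" using lam by simp
    then show ?thesis using Lnn[of "k-1"] Lnn[of "k+1"] \<open>I0 k = 0\<close> by simp
  qed
  have Lpos: "L j > 0" for j
  proof (rule ccontr)
    assume "\<not> L j > 0"
    then have Lj: "L j = 0" using Lnn[of j] by simp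
    have ind: "L (j + int n) = 0 \<and> L (j - int n) = 0" for n
    proof (induction n)
      case 0 then show ?case using Lj by simp
    next
      case (Suc n)
      have a: "L (j + int n + 1) = 0" using zprop[of "j + int n"] Suc by simp
      have b: "L (j - int n - 1) = 0" using zprop[of "j - int n"] Suc by simp
      show ?case using a b by (simp add: algebra_simps)
    qed
    have allz: "L k = 0" for k
    proof (cases "k \<ge> j")
      case True
      then have "k = j + int (nat (k - j))" by simp
      then show ?thesis using ind[of "nat (k - j)"] by metis
    next
      case False
      then have "k = j - int (nat (j - k))" by simp
      then show ?thesis using ind[of "nat (j - k)"] by metis
    qed
    obtain k where "I0 k > 0" using I0_pos by blast
    then show False using zprop[OF allz[of k]] by simp
  qed
  \<comment> \<open>Step 6: comparison with the stationary solution via ratios\<close>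
  have Ule: "U j \<le> Iinf j" for j
  proof -
    have "U j / Iinf j \<le> 1"
    proof (rule ratio_max[where P = Iinf and M = M and B = al])
      show "\<And>j. 0 < Iinf j" by (rule Iinf_pos)
      show "\<And>j. Iinf j \<le> M" using M by (simp add: abs_le_iff)
      show "\<And>j. U j / Iinf j \<le> al" using Uub Iinf_pos by (simp add: divide_le_eq)
      fix j assume rj: "U j / Iinf j > 1"
      define r where "r = U j / Iinf j"
      define v where "v = Iinf j"
      have v0: "v > 0" unfolding v_def by (rule Iinf_pos)
      have r1: "r > 1" using rj unfolding r_def by simp
      have Uj: "U j = r * v" unfolding r_def v_def using Iinf_pos[of j] by simp
      have e1: "Iinf (j+1) * (U (j+1) / Iinf (j+1) - U j / Iinf j) = U (j+1) - r * Iinf (j+1)"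
        unfolding r_def using Iinf_pos[of "j+1"] by (simp add: field_simps)
      have e2: "Iinf (j-1) * (U (j-1) / Iinf (j-1) - U j / Iinf j) = U (j-1) - r * Iinf (j-1)"
        unfolding r_def using Iinf_pos[of "j-1"] by (simp add: field_simps)
      define X where "X = lam * (U (j-1) + U (j+1))"
      define Y where "Y = lam * (Iinf (j-1) + Iinf (j+1))"
      have us: "reac s0 tau eta (r * v) + I0 j + X - 2 * lam * (r * v) \<ge> 0"
        using Usub[of j] unfolding dlap_def X_def Uj by (simp add: algebra_simps)
      have ie: "Y = 2 * lam * v - reac s0 tau eta v - I0 j"
        using Iinf_eq[of j] unfolding dlap_def Y_def v_def by (simp add: algebra_simps)
      have rY: "r * Y = 2 * lam * (r * v) - r * reac s0 tau eta v - r * I0 j"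
        unfolding ie by (simp add: algebra_simps)
      have conc: "reac s0 tau eta (r * v) < r * reac s0 tau eta v" by (rule reac_conc_gt[OF tau s0p r1 v0])
      have rI: "r * I0 j \<ge> I0 j" using r1 I0nn[of j] by (simp add: mult_le_cancel_right1)
      have "X - r * Y > 0" using us rY conc rI by linarith
      moreover have "X - r * Y = lam * ((U (j+1) - r * Iinf (j+1)) + (U (j-1) - r * Iinf (j-1)))"
        unfolding X_def Y_def by (simp add: algebra_simps)
      ultimately have "(U (j+1) - r * Iinf (j+1)) + (U (j-1) - r * Iinf (j-1)) > 0"
        using lam by (simp add: zero_less_mult_iff)
      then show "Iinf (j+1) * (U (j+1) / Iinf (j+1) - U j / Iinf j) + Iinf (j-1) * (U (j-1) / Iinf (j-1) - U j / Iinf j) > 0"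
        unfolding e1 e2 by simp
    qed
    then show ?thesis using Iinf_pos[of j] by (simp add: divide_le_eq)
  qed
  have Lge: "L j \<ge> Iinf j" for j
  proof -
    have "- (L j / Iinf j) \<le> -1"
    proof (rule ratio_max[where P = Iinf and M = M and B = 0])
      show "\<And>j. 0 < Iinf j" by (rule Iinf_pos)
      show "\<And>j. Iinf j \<le> M" using M by (simp add: abs_le_iff)
      show "\<And>j. - (L j / Iinf j) \<le> 0" using Lnn Iinf_pos by (simp add: less_imp_le)
      fix j assume rj: "- (L j / Iinf j) > -1"
      define r where "r = L j / Iinf j"
      define v where "v = Iinf j"
      have v0: "v > 0" unfolding v_def by (rule Iinf_pos)
      have r1: "r < 1" using rj unfolding r_def by simp
      have r0: "r > 0" unfolding r_def using Lpos[of j] Iinf_pos[of j] by simp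
      have Lj: "L j = r * v" unfolding r_def v_def using Iinf_pos[of j] by simp
      have e1: "Iinf (j+1) * (- (L (j+1) / Iinf (j+1)) - - (L j / Iinf j)) = r * Iinf (j+1) - L (j+1)"
        unfolding r_def using Iinf_pos[of "j+1"] by (simp add: field_simps)
      have e2: "Iinf (j-1) * (- (L (j-1) / Iinf (j-1)) - - (L j / Iinf j)) = r * Iinf (j-1) - L (j-1)"
        unfolding r_def using Iinf_pos[of "j-1"] by (simp add: field_simps)
      define X where "X = lam * (L (j-1) + L (j+1))"
      define Y where "Y = lam * (Iinf (j-1) + Iinf (j+1))"
      have ls: "reac s0 tau eta (r * v) + I0 j + X - 2 * lam * (r * v) \<le> 0"
        using Lsup[of j] unfolding dlap_def X_def Lj by (simp add: algebra_simps)
      have ie: "Y = 2 * lam * v - reac s0 tau eta v - I0 j"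
        using Iinf_eq[of j] unfolding dlap_def Y_def v_def by (simp add: algebra_simps)
      have rY: "r * Y = 2 * lam * (r * v) - r * reac s0 tau eta v - r * I0 j"
        unfolding ie by (simp add: algebra_simps)
      have conc: "reac s0 tau eta (r * v) > r * reac s0 tau eta v" by (rule reac_conc_lt[OF tau s0p r0 r1 v0])
      have rI: "r * I0 j \<le> I0 j" using mult_right_mono[of r 1 "I0 j"] r1 I0nn[of j] by simp
      have "r * Y - X > 0" using ls rY conc rI by linarith
      moreover have "r * Y - X = lam * ((r * Iinf (j+1) - L (j+1)) + (r * Iinf (j-1) - L (j-1)))"
        unfolding X_def Y_def by (simp add: algebra_simps)
      ultimately have "(r * Iinf (j+1) - L (j+1)) + (r * Iinf (j-1) - L (j-1)) > 0"
        using lam by (simp add: zero_less_mult_iff)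
      then show "Iinf (j+1) * (- (L (j+1) / Iinf (j+1)) - - (L j / Iinf j)) + Iinf (j-1) * (- (L (j-1) / Iinf (j-1)) - - (L j / Iinf j)) > 0"
        unfolding e1 e2 by simp
    qed
    then show ?thesis using Iinf_pos[of j] by (simp add: le_divide_eq)
  qed
  have ev: "eventually (\<lambda>t. \<bar>I t j - Iinf j\<bar> < e) at_top" if e: "e > 0" for j e
  proof -
    obtain T1 where T1: "\<And>t. t \<ge> T1 \<Longrightarrow> I t j \<le> U j + e/2" using U1[of j] e by (meson half_gt_zero)
    obtain T2 where T2: "\<And>t. t \<ge> T2 \<Longrightarrow> - I t j \<le> V j + e/2" using V1[of j] e by (meson half_gt_zero)
    have "\<bar>I t j - Iinf j\<bar> < e" if "t \<ge> max T1 T2" for t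
    proof -
      have "I t j \<le> U j + e/2" using T1 that by simp
      moreover have "- I t j \<le> V j + e/2" using T2 that by simp
      ultimately show ?thesis using Ule[of j] Lge[of j] e unfolding L_def by (simp add: abs_less_iff)
    qed
    then show ?thesis unfolding eventually_at_top_linorder by blast
  qed
  show ?thesis
  proof (intro allI impI)
    fix K :: nat and e :: real assume e: "e > 0"
    have "eventually (\<lambda>t. \<forall>j\<in>{- int K .. int K}. \<bar>I t j - Iinf j\<bar> < e) at_top"
      using ev[OF e] by (intro eventually_ball_finite) auto
    then obtain T where T: "\<And>t. t \<ge> T \<Longrightarrow> \<forall>j\<in>{- int K .. int K}. \<bar>I t j - Iinf j\<bar> < e"
      unfolding eventually_at_top_linorder by blast
    show "\<exists>T. \<forall>t\<ge>T. \<forall>j. \<bar>j\<bar> \<le> int K \<longrightarrow> \<bar>I t j - Iinf j\<bar> < e"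
      using T by (intro exI[of _ T]) (auto simp: abs_le_iff)
  qed
qed

end
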